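(* Let $I\subset S$ be a $k$-clean monomial ideal. Then its radical $\sqrt{I}$ is $k$-clean.
   Context: $S=K[x_1,\dots,x_n]$ is a polynomial ring over a field $K$. For a monomial $u=x_1^{a_1}\cdots x_n^{a_n}$, $\mathrm{supp}(u)=\{i: a_i>0\}$. For an ideal $I$, $\min(I)$ denotes the set of minimal prime ideals of $I$. A monomial $u\neq 1$ with $u\notin I$ is a cleaner monomial of the monomial ideal $I$ if $\min(I+Su)\subseteq \min(I)$. For an integer $k\ge 0$, the class of $k$-clean monomial ideals is defined recursively (as the smallest class closed under the following rule): a proper monomial ideal $I$ is $k$-clean if either $I$ is a prime ideal, or $I$ has no embedded prime ideals (i.e. $\mathrm{Ass}(S/I)=\min(I)$) and there exists a cleaner monomial $u$ of $I$ with $|\mathrm{supp}(u)|\le k+1$ such that both $I:u$ and $I+Su$ are $k$-clean. *)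

theory Defs
  imports Main "HOL-Library.Poly_Mapping"
begin

text \<open>The polynomial ring S = K[x_i : i in n] over a field K, with a finite index type n
  of variable indices, is the type mpoly below (finitely supported
  coefficient functions on exponent vectors, multiplication = convolution).\<close>

type_synonym ('n, 'k) mpoly = "('n \<Rightarrow>\<^sub>0 nat) \<Rightarrow>\<^sub>0 'k"

definition is_ideal :: "'a::comm_ring_1 set \<Rightarrow> bool" where
  "is_ideal I \<longleftrightarrow> 0 \<in> I \<and> (\<forall>a\<in>I. \<forall>b\<in>I. a + b \<in> I) \<and> (\<forall>r. \<forall>a\<in>I. r * a \<in> I)"

definition ideal_gen :: "'a::comm_ring_1 set \<Rightarrow> 'a set" where
  "ideal_gen G = \<Inter> {J. is_ideal J \<and> G \<subseteq> J}"

definition is_prime_ideal :: "'a::comm_ring_1 set \<Rightarrow> bool" where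
  "is_prime_ideal P \<longleftrightarrow> is_ideal P \<and> P \<noteq> UNIV \<and> (\<forall>a b. a * b \<in> P \<longrightarrow> a \<in> P \<or> b \<in> P)"

definition colon :: "'a::comm_ring_1 set \<Rightarrow> 'a \<Rightarrow> 'a set" where
  "colon I u = {f. f * u \<in> I}"

definition radical :: "'a::comm_ring_1 set \<Rightarrow> 'a set" where
  "radical I = {f. \<exists>m. f ^ m \<in> I}"

definition minprimes :: "'a::comm_ring_1 set \<Rightarrow> 'a set set" where
  "minprimes I = {P. is_prime_ideal P \<and> I \<subseteq> P \<and>
                     (\<forall>Q. is_prime_ideal Q \<and> I \<subseteq> Q \<and> Q \<subseteq> P \<longrightarrow> Q = P)}"

text \<open>Ass(S/I): prime ideals that are annihilators I : f of elements f + I of S/I.\<close>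
definition ass :: "'a::comm_ring_1 set \<Rightarrow> 'a set set" where
  "ass I = {P. is_prime_ideal P \<and> (\<exists>f. P = colon I f)}"

definition monom :: "('n \<Rightarrow>\<^sub>0 nat) \<Rightarrow> ('n, 'k::comm_ring_1) mpoly" where
  "monom a = Poly_Mapping.single a 1"

definition monomial_ideal :: "('n, 'k::comm_ring_1) mpoly set \<Rightarrow> bool" where
  "monomial_ideal I \<longleftrightarrow> is_ideal I \<and> (\<exists>A. I = ideal_gen (monom ` A))"

definition cleaner :: "('n, 'k::comm_ring_1) mpoly set \<Rightarrow> ('n \<Rightarrow>\<^sub>0 nat) \<Rightarrow> bool" where
  "cleaner I a \<longleftrightarrow> a \<noteq> 0 \<and> monom a \<notin> I \<and>
      minprimes (ideal_gen (I \<union> {monom a})) \<subseteq> minprimes I"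

text \<open>k-clean monomial ideals (smallest class closed under the two rules).
  The support of x^a is keys a.\<close>
inductive kclean :: "nat \<Rightarrow> ('n, 'k::field) mpoly set \<Rightarrow> bool" for k where
  prime: "monomial_ideal (I :: ('n, 'k) mpoly set) \<Longrightarrow> I \<noteq> UNIV \<Longrightarrow> is_prime_ideal I \<Longrightarrow> kclean k I"
| step: "monomial_ideal I \<Longrightarrow> I \<noteq> UNIV \<Longrightarrow> ass I = minprimes I \<Longrightarrow>
         cleaner I a \<Longrightarrow> card (Poly_Mapping.keys a) \<le> k + 1 \<Longrightarrow>
         kclean k (colon I (monom a)) \<Longrightarrow> kclean k (ideal_gen (I \<union> {monom a})) \<Longrightarrow>
         kclean k I"

end

theory Submission
  imports Defs
begin


abbreviation ks where "ks \<equiv> Poly_Mapping.keys"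
abbreviation lk where "lk \<equiv> poly_mapping.lookup"

definition mI :: "('n \<Rightarrow>\<^sub>0 nat) set \<Rightarrow> ('n, 'k::comm_ring_1) mpoly set" where
  "mI U = {f. ks f \<subseteq> U}"

definition upset :: "('n \<Rightarrow>\<^sub>0 nat) set \<Rightarrow> bool" where
  "upset U \<longleftrightarrow> (\<forall>t s. t \<in> U \<longrightarrow> t + s \<in> U)"

definition up :: "('n \<Rightarrow>\<^sub>0 nat) set \<Rightarrow> ('n \<Rightarrow>\<^sub>0 nat) set" where
  "up A = {t. \<exists>a\<in>A. \<exists>s. t = a + s}"

lemma upset_up: "upset (up A)"
  unfolding upset_def
proof (intro allI impI)
  fix t s assume "t \<in> up A"
  then obtain a s0 where "a \<in> A" "t = a + s0" unfolding up_def by blast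
  then have "t + s = a + (s0 + s)" by (simp add: add.assoc)
  then show "t + s \<in> up A" using \<open>a \<in> A\<close> unfolding up_def by blast
qed

lemma up_upset: assumes "upset U" shows "up U = U"
proof
  show "up U \<subseteq> U" using assms unfolding upset_def up_def by blast
  show "U \<subseteq> up U"
  proof
    fix t assume "t \<in> U"
    moreover have "t = t + 0" by simp
    ultimately show "t \<in> up U" unfolding up_def by blast
  qed
qed

lemma mI_ideal: assumes "upset U" shows "is_ideal (mI U :: ('n, 'k::comm_ring_1) mpoly set)"
proof -
  have "r * a \<in> mI U" if "a \<in> mI U" for r a :: "('n, 'k) mpoly"
  proof -
    have "ks (r * a) \<subseteq> {x + y |x y. x \<in> ks r \<and> y \<in> ks a}" by (rule keys_mult)
    also have "\<dots> \<subseteq> U" using that assms unfolding mI_def upset_def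
      by (auto, metis add.commute subsetD)
    finally show ?thesis unfolding mI_def by simp
  qed
  moreover have "a + b \<in> mI U" if "a \<in> mI U" "b \<in> mI U" for a b :: "('n, 'k) mpoly"
    using that keys_add[of a b] unfolding mI_def by blast
  ultimately show ?thesis unfolding is_ideal_def mI_def by auto
qed

lemma ideal_gen_least: "is_ideal J \<Longrightarrow> G \<subseteq> J \<Longrightarrow> ideal_gen G \<subseteq> J"
  unfolding ideal_gen_def by blast

lemma ideal_gen_sup: "G \<subseteq> ideal_gen G"
  unfolding ideal_gen_def by blast

lemma ideal_sum: assumes "is_ideal J" "finite A" "\<forall>x\<in>A. g x \<in> J" shows "sum g A \<in> J"
  using assms(2,3)
proof (induction A rule: finite_induct)
  case empty then show ?case using assms(1) unfolding is_ideal_def by simp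
next
  case (insert x F) then show ?case using assms(1) unfolding is_ideal_def by simp
qed

lemma poly_sum_singles: "f = (\<Sum>t\<in>ks f. Poly_Mapping.single t (lk f t))"
proof (rule poly_mapping_eqI)
  fix k
  have "lk (\<Sum>t\<in>ks f. Poly_Mapping.single t (lk f t)) k = (\<Sum>t\<in>ks f. lk (Poly_Mapping.single t (lk f t)) k)"
    by (rule lookup_sum)
  also have "\<dots> = lk f k"
  proof (cases "k \<in> ks f")
    case True
    then show ?thesis
      by (simp add: lookup_single sum.remove[OF finite_keys True] when_def)
  next
    case False
    then show ?thesis by (auto simp: lookup_single when_def in_keys_iff intro!: sum.neutral)
  qed
  finally show "lk f k = lk (\<Sum>t\<in>ks f. Poly_Mapping.single t (lk f t)) k" by simp
qed

lemma monom_mult: "monom a * monom b = (monom (a + b) :: ('n, 'k::comm_ring_1) mpoly)"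
  unfolding monom_def by (simp add: mult_single)

lemma single_mult_monom: "Poly_Mapping.single s c * monom a = (Poly_Mapping.single (s + a) c :: ('n, 'k::comm_ring_1) mpoly)"
  unfolding monom_def by (simp add: mult_single)

lemma keys_monom [simp]: "ks (monom a :: ('n, 'k::comm_ring_1) mpoly) = {a}"
  unfolding monom_def by simp

lemma monom_in_mI [simp]: "(monom a :: ('n, 'k::comm_ring_1) mpoly) \<in> mI U \<longleftrightarrow> a \<in> U"
  unfolding mI_def by simp

lemma mI_mono: "U \<subseteq> V \<Longrightarrow> mI U \<subseteq> mI V"
  unfolding mI_def by auto

lemma mI_sub_iff: "(mI U :: ('n, 'k::comm_ring_1) mpoly set) \<subseteq> mI V \<longleftrightarrow> U \<subseteq> V"
proof
  assume a: "(mI U :: ('n, 'k::comm_ring_1) mpoly set) \<subseteq> mI V"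
  show "U \<subseteq> V"
  proof
    fix t assume "t \<in> U"
    then have "(monom t :: ('n, 'k) mpoly) \<in> mI U" by simp
    then have "(monom t :: ('n, 'k) mpoly) \<in> mI V" using a by blast
    then show "t \<in> V" by simp
  qed
qed (rule mI_mono)

lemma mI_eq_iff: "(mI U :: ('n, 'k::comm_ring_1) mpoly set) = mI V \<longleftrightarrow> U = V"
  by (metis mI_sub_iff order_antisym order_refl)

lemma ideal_gen_monom: "(ideal_gen (monom ` A) :: ('n, 'k::comm_ring_1) mpoly set) = mI (up A)"
proof
  show "ideal_gen (monom ` A) \<subseteq> (mI (up A) :: ('n, 'k) mpoly set)"
  proof (rule ideal_gen_least[OF mI_ideal[OF upset_up]])
    show "monom ` A \<subseteq> (mI (up A) :: ('n, 'k) mpoly set)"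
    proof
      fix x :: "('n, 'k) mpoly" assume "x \<in> monom ` A"
      then obtain a where "a \<in> A" "x = monom a" by blast
      moreover have "a = a + 0" by simp
      ultimately have "a \<in> up A" unfolding up_def by blast
      then show "x \<in> (mI (up A) :: ('n, 'k) mpoly set)" using \<open>x = monom a\<close> by simp
    qed
  qed
  show "(mI (up A) :: ('n, 'k) mpoly set) \<subseteq> ideal_gen (monom ` A)"
  proof
    fix f :: "('n, 'k) mpoly" assume f: "f \<in> mI (up A)"
    show "f \<in> ideal_gen (monom ` A)"
      unfolding ideal_gen_def
    proof (rule InterI)
      fix J :: "('n, 'k) mpoly set" assume "J \<in> {J. is_ideal J \<and> monom ` A \<subseteq> J}"
      then have J: "is_ideal J" "monom ` A \<subseteq> J" by auto
      have "(\<Sum>t\<in>ks f. Poly_Mapping.single t (lk f t)) \<in> J"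
      proof (rule ideal_sum[OF J(1) finite_keys], rule ballI)
        fix t assume "t \<in> ks f"
        with f obtain a s where "a \<in> A" "t = s + a" unfolding mI_def up_def by (auto simp: add.commute)
        then have "Poly_Mapping.single t (lk f t) = Poly_Mapping.single s (lk f t) * monom a"
          by (simp add: single_mult_monom)
        moreover have "monom a \<in> J" using J(2) \<open>a \<in> A\<close> by auto
        ultimately show "Poly_Mapping.single t (lk f t) \<in> J" using J(1) unfolding is_ideal_def by simp
      qed
      then show "f \<in> J" using poly_sum_singles[of f] by simp
    qed
  qed
qed

lemma mI_gen: "upset U \<Longrightarrow> (mI U :: ('n, 'k::comm_ring_1) mpoly set) = ideal_gen (monom ` U)"
  by (simp add: ideal_gen_monom up_upset)

lemma monomial_ideal_iff: "monomial_ideal (I :: ('n, 'k::comm_ring_1) mpoly set) \<longleftrightarrow> (\<exists>U. upset U \<and> I = mI U)"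
proof
  assume "monomial_ideal I"
  then obtain A where "I = ideal_gen (monom ` A)" unfolding monomial_ideal_def by blast
  then have "I = mI (up A)" by (simp add: ideal_gen_monom)
  then show "\<exists>U. upset U \<and> I = mI U" using upset_up by blast
next
  assume "\<exists>U. upset U \<and> I = mI U"
  then obtain U where U: "upset U" "I = mI U" by blast
  then have "is_ideal I" by (simp add: mI_ideal)
  moreover have "I = ideal_gen (monom ` U)" using U by (simp add: mI_gen)
  ultimately show "monomial_ideal I" unfolding monomial_ideal_def by blast
qed

lemma mI_UNIV: "upset U \<Longrightarrow> (mI U :: ('n, 'k::comm_ring_1) mpoly set) = UNIV \<longleftrightarrow> 0 \<in> U"
proof
  assume "mI U = (UNIV :: ('n, 'k) mpoly set)"
  then have "(monom 0 :: ('n, 'k) mpoly) \<in> mI U" by simp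
  then show "0 \<in> U" by simp
next
  assume "upset U" "0 \<in> U"
  have "\<forall>t. t \<in> U"
  proof
    fix t have "0 + t \<in> U" using \<open>upset U\<close> \<open>0 \<in> U\<close> unfolding upset_def by blast
    then show "t \<in> U" by simp
  qed
  then have "U = UNIV" by auto
  then show "mI U = UNIV" unfolding mI_def by auto
qed



lemma is_ideal_gen: "is_ideal (ideal_gen G)"
  unfolding is_ideal_def ideal_gen_def by auto

lemma lk_mult_monom: "lk (f * monom a) (t + a) = lk (f :: ('n, 'k::comm_ring_1) mpoly) t"
proof -
  have "f * monom a = (\<Sum>s\<in>ks f. Poly_Mapping.single s (lk f s)) * monom a"
    using poly_sum_singles[of f] by simp
  also have "\<dots> = (\<Sum>s\<in>ks f. Poly_Mapping.single (s + a) (lk f s))"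
    by (simp add: sum_distrib_right single_mult_monom)
  finally have "lk (f * monom a) (t + a) = (\<Sum>s\<in>ks f. lk (Poly_Mapping.single (s + a) (lk f s)) (t + a))"
    by (simp add: lookup_sum)
  also have "\<dots> = (\<Sum>s\<in>ks f. (lk f s when s = t))"
    by (rule sum.cong) (auto simp: lookup_single when_def)
  also have "\<dots> = lk f t"
  proof (cases "t \<in> ks f")
    case True
    then show ?thesis by (simp add: sum.remove[OF finite_keys True] when_def)
  next
    case False
    then show ?thesis by (auto simp: when_def in_keys_iff intro!: sum.neutral)
  qed
  finally show ?thesis .
qed

lemma colon_mI: "colon (mI U :: ('n, 'k::comm_ring_1) mpoly set) (monom a) = mI {t. t + a \<in> U}"
proof (intro set_eqI iffI)
  fix f :: "('n, 'k) mpoly"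
  assume "f \<in> colon (mI U) (monom a)"
  then have h: "ks (f * monom a) \<subseteq> U" unfolding colon_def mI_def by simp
  have "ks f \<subseteq> {t. t + a \<in> U}"
  proof
    fix t assume "t \<in> ks f"
    then have "lk (f * monom a) (t + a) \<noteq> 0" by (simp add: lk_mult_monom in_keys_iff)
    then have "t + a \<in> ks (f * monom a)" by (simp add: in_keys_iff)
    with h show "t \<in> {t. t + a \<in> U}" by auto
  qed
  then show "f \<in> mI {t. t + a \<in> U}" unfolding mI_def by simp
next
  fix f :: "('n, 'k) mpoly"
  assume "f \<in> mI {t. t + a \<in> U}"
  then have h: "ks f \<subseteq> {t. t + a \<in> U}" unfolding mI_def by simp
  have "ks (f * monom a) \<subseteq> {x + y |x y. x \<in> ks f \<and> y \<in> ks (monom a :: ('n, 'k) mpoly)}"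
    by (rule keys_mult)
  also have "\<dots> \<subseteq> U" using h by auto
  finally show "f \<in> colon (mI U) (monom a)" unfolding colon_def mI_def by simp
qed

lemma up_Un: "up (A \<union> B) = up A \<union> up B"
  unfolding up_def by auto

lemma gen_insert:
  assumes "upset U"
  shows "ideal_gen (mI U \<union> {monom a} :: ('n, 'k::comm_ring_1) mpoly set) = mI (U \<union> up {a})"
proof -
  have e: "up (U \<union> {a}) = U \<union> up {a}" using up_Un[of U "{a}"] up_upset[OF assms] by simp
  have "a \<in> up {a}" unfolding up_def by (auto intro: exI[of _ 0])
  then have s1: "mI U \<union> {monom a} \<subseteq> (mI (U \<union> up {a}) :: ('n, 'k) mpoly set)"
    using mI_mono[of U "U \<union> up {a}"] by auto
  show ?thesis
  proof
    show "ideal_gen (mI U \<union> {monom a}) \<subseteq> (mI (U \<union> up {a}) :: ('n, 'k) mpoly set)"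
      by (rule ideal_gen_least[OF mI_ideal s1]) (metis e upset_up)
    have "monom ` (U \<union> {a}) \<subseteq> (mI U \<union> {monom a} :: ('n, 'k) mpoly set)" by auto
    also have "\<dots> \<subseteq> ideal_gen (mI U \<union> {monom a})" by (rule ideal_gen_sup)
    finally have "ideal_gen (monom ` (U \<union> {a})) \<subseteq> ideal_gen (mI U \<union> {monom a} :: ('n, 'k) mpoly set)"
      by (rule ideal_gen_least[OF is_ideal_gen])
    moreover have "ideal_gen (monom ` (U \<union> {a})) = (mI (U \<union> up {a}) :: ('n, 'k) mpoly set)"
      by (subst e[symmetric]) (rule ideal_gen_monom)
    ultimately show "(mI (U \<union> up {a}) :: ('n, 'k) mpoly set) \<subseteq> ideal_gen (mI U \<union> {monom a})"
      by simp
  qed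
qed

lemma keys_add_nat: "ks (s + t :: 'n \<Rightarrow>\<^sub>0 nat) = ks s \<union> ks t"
  by (auto simp: in_keys_iff lookup_add)

definition ind :: "'n::finite set \<Rightarrow> ('n \<Rightarrow>\<^sub>0 nat)" where
  "ind S = Abs_poly_mapping (\<lambda>i. if i \<in> S then 1 else 0)"

lemma lk_ind: "lk (ind S) i = (if i \<in> S then 1 else 0)"
proof -
  have "finite {i. (if i \<in> S then 1 else 0::nat) \<noteq> 0}" by simp
  then show ?thesis unfolding ind_def by simp
qed

lemma keys_ind [simp]: "ks (ind S) = S"
  by (auto simp: in_keys_iff lk_ind split: if_splits)

lemma ind_empty [simp]: "ind {} = 0"
  by (rule poly_mapping_eqI) (simp add: lk_ind)

lemma up_ind: fixes S :: "'n::finite set" shows "up {ind S} = {t. S \<subseteq> ks t}"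
proof (intro set_eqI iffI)
  fix t assume "t \<in> up {ind S}"
  then obtain s where "t = ind S + s" unfolding up_def by auto
  then show "t \<in> {t. S \<subseteq> ks t}" by (simp add: keys_add_nat)
next
  fix t :: "'n \<Rightarrow>\<^sub>0 nat" assume "t \<in> {t. S \<subseteq> ks t}"
  then have h: "S \<subseteq> ks t" by simp
  have "t = ind S + (t - ind S)"
  proof (rule poly_mapping_eqI)
    fix i show "lk t i = lk (ind S + (t - ind S)) i"
      using h by (auto simp: lookup_add lookup_minus lk_ind in_keys_iff)
  qed
  then show "t \<in> up {ind S}" unfolding up_def by blast
qed

lemma up_single_keys: "t \<in> up {a} \<Longrightarrow> ks a \<subseteq> ks t"
  unfolding up_def by (auto simp: keys_add_nat)

lemma keys_empty_iff: "ks p = {} \<longleftrightarrow> p = 0"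
proof
  assume "ks p = {}" then show "p = 0" by (intro poly_mapping_eqI) (auto simp: in_keys_iff)
qed simp

lemma mpoly_no_zd:
  fixes f g :: "('n::finite, 'k::field) mpoly"
  assumes "f \<noteq> 0" "g \<noteq> 0" shows "f * g \<noteq> 0"
proof -
  obtain \<iota> :: "'n \<Rightarrow> nat" and m where "\<iota> ` UNIV = {i. i < m}" "inj_on \<iota> UNIV"
    using finite_imp_inj_to_nat_seg[of "UNIV :: 'n set"] by auto
  then have inj: "inj \<iota>" by simp
  define \<phi> where "\<phi> s = Abs_poly_mapping (\<lambda>n. \<Sum>i\<in>{i. \<iota> i = n}. lk s i)" for s :: "'n \<Rightarrow>\<^sub>0 nat"
  have lk\<phi>: "lk (\<phi> s) n = (\<Sum>i\<in>{i. \<iota> i = n}. lk s i)" for s n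
  proof -
    have "{n. (\<Sum>i\<in>{i. \<iota> i = n}. lk s i) \<noteq> 0} \<subseteq> \<iota> ` UNIV"
      by (auto elim: sum.not_neutral_contains_not_neutral)
    then have "finite {n. (\<Sum>i\<in>{i. \<iota> i = n}. lk s i) \<noteq> 0}"
      by (rule finite_subset) simp
    then show ?thesis unfolding \<phi>_def by simp
  qed
  have lk\<phi>\<iota>: "lk (\<phi> s) (\<iota> i) = lk s i" for s i
  proof -
    have "{j. \<iota> j = \<iota> i} = {i}" using inj by (auto dest: injD)
    then show ?thesis by (simp add: lk\<phi>)
  qed
  have \<phi>_add: "\<phi> (s + t) = \<phi> s + \<phi> t" for s t
    by (rule poly_mapping_eqI) (simp add: lk\<phi> lookup_add sum.distrib)
  have \<phi>_inj: "s = t" if "\<phi> s = \<phi> t" for s t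
  proof (rule poly_mapping_eqI)
    fix i show "lk s i = lk t i" using lk\<phi>\<iota>[of s i] lk\<phi>\<iota>[of t i] that by simp
  qed
  have maxex: "\<exists>a\<in>ks p. \<forall>x\<in>ks p. x \<noteq> a \<longrightarrow> \<phi> x < \<phi> a" if "p \<noteq> 0" for p :: "('n, 'k) mpoly"
  proof -
    have "ks p \<noteq> {}" using keys_empty_iff[of p] \<open>p \<noteq> 0\<close> by blast
    then have ne: "\<phi> ` ks p \<noteq> {}" by blast
    have "Max (\<phi> ` ks p) \<in> \<phi> ` ks p" by (rule Max_in[OF finite_imageI[OF finite_keys] ne])
    then obtain a where a: "a \<in> ks p" "\<phi> a = Max (\<phi> ` ks p)" by auto
    have "\<phi> x < \<phi> a" if "x \<in> ks p" "x \<noteq> a" for x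
    proof -
      have "\<phi> x \<le> \<phi> a" using a that by simp
      moreover have "\<phi> x \<noteq> \<phi> a" using \<phi>_inj that by blast
      ultimately show ?thesis by simp
    qed
    then show ?thesis using a by blast
  qed
  obtain a where a: "a \<in> ks f" "\<forall>x\<in>ks f. x \<noteq> a \<longrightarrow> \<phi> x < \<phi> a" using maxex[OF assms(1)] by blast
  obtain b where b: "b \<in> ks g" "\<forall>x\<in>ks g. x \<noteq> b \<longrightarrow> \<phi> x < \<phi> b" using maxex[OF assms(2)] by blast
  have "lk (f * g) (a + b) = prod_fun (lk f) (lk g) (a + b)"
    by (simp add: times_poly_mapping.rep_eq)
  also have "\<dots> = (\<Sum>(x, y). lk f x * lk g y when a + b = x + y)"
    by (rule prod_fun_unfold_prod) simp_all
  also have "\<dots> = (\<Sum>xy. (case xy of (x, y) \<Rightarrow> lk f x * lk g y) when (a, b) = xy)"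
  proof (rule Sum_any.cong)
    fix xy :: "('n \<Rightarrow>\<^sub>0 nat) \<times> ('n \<Rightarrow>\<^sub>0 nat)"
    obtain x y where xy: "xy = (x, y)" by (cases xy)
    show "(case xy of (x, y) \<Rightarrow> lk f x * lk g y when a + b = x + y) =
          ((case xy of (x, y) \<Rightarrow> lk f x * lk g y) when (a, b) = xy)"
    proof (cases "(a, b) = (x, y)")
      case True then show ?thesis using xy by (simp add: when_def)
    next
      case False
      show ?thesis
      proof (cases "lk f x * lk g y = 0")
        case True then show ?thesis using xy by (simp add: when_def)
      next
        case nz: False
        then have "x \<in> ks f" "y \<in> ks g" by (auto simp: in_keys_iff)
        then have le1: "\<phi> x \<le> \<phi> a" and le2: "\<phi> y \<le> \<phi> b" using a b by (auto intro: less_imp_le)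
        have "\<phi> x + \<phi> y < \<phi> a + \<phi> b"
        proof (cases "x = a")
          case True
          then have "y \<noteq> b" using False by simp
          then have "\<phi> y < \<phi> b" using b \<open>y \<in> ks g\<close> by blast
          then show ?thesis using True by (simp add: add_strict_left_mono)
        next
          case False
          then have "\<phi> x < \<phi> a" using a \<open>x \<in> ks f\<close> by blast
          then show ?thesis using le2 by (rule add_less_le_mono)
        qed
        then have "a + b \<noteq> x + y" using \<phi>_add by (metis less_irrefl)
        then show ?thesis using xy False by (auto simp add: when_def)
      qed
    qed
  qed
  also have "\<dots> = lk f a * lk g b" by simp
  finally have "lk (f * g) (a + b) = lk f a * lk g b" .
  moreover have "lk f a * lk g b \<noteq> 0" using a(1) b(1) by (simp add: in_keys_iff)
  ultimately show ?thesis by auto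
qed



definition PF :: "'n set \<Rightarrow> ('n, 'k::comm_ring_1) mpoly set" where
  "PF F = mI {t. ks t \<inter> F \<noteq> {}}"

definition rho :: "'n set \<Rightarrow> ('n, 'k::comm_ring_1) mpoly \<Rightarrow> ('n, 'k) mpoly" where
  "rho F f = Abs_poly_mapping (\<lambda>t. if ks t \<inter> F = {} then lk f t else 0)"

lemma lk_rho: "lk (rho F f) t = (if ks t \<inter> F = {} then lk f t else 0)"
proof -
  have "{t. (if ks t \<inter> F = {} then lk f t else 0) \<noteq> 0} \<subseteq> ks f"
    by (auto simp: in_keys_iff split: if_splits)
  then have "finite {t. (if ks t \<inter> F = {} then lk f t else 0) \<noteq> 0}"
    by (rule finite_subset) simp
  then show ?thesis unfolding rho_def by simp
qed

lemma rho_mult: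
  fixes F :: "'n set" and f g :: "('n, 'k::comm_ring_1) mpoly"
  shows "rho F (f * g) = rho F f * rho F g"
proof (rule poly_mapping_eqI)
  fix k
  have L: "lk (f * g) k = (\<Sum>(x, y). lk f x * lk g y when k = x + y)"
    by (simp add: times_poly_mapping.rep_eq prod_fun_unfold_prod)
  have R: "lk (rho F f * rho F g) k = (\<Sum>(x, y). lk (rho F f) x * lk (rho F g) y when k = x + y)"
    by (simp add: times_poly_mapping.rep_eq prod_fun_unfold_prod)
  show "lk (rho F (f * g)) k = lk (rho F f * rho F g) k"
  proof (cases "ks k \<inter> F = {}")
    case True
    have "lk (rho F (f * g)) k = (\<Sum>(x, y). lk f x * lk g y when k = x + y)"
      using True L by (simp add: lk_rho)
    also have "\<dots> = (\<Sum>(x, y). lk (rho F f) x * lk (rho F g) y when k = x + y)"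
    proof (rule Sum_any.cong)
      fix xy :: "('n \<Rightarrow>\<^sub>0 nat) \<times> ('n \<Rightarrow>\<^sub>0 nat)"
      obtain x y where xy: "xy = (x, y)" by (cases xy)
      show "(case xy of (x, y) \<Rightarrow> lk f x * lk g y when k = x + y) =
            (case xy of (x, y) \<Rightarrow> lk (rho F f) x * lk (rho F g) y when k = x + y)"
        using True by (auto simp: xy when_def lk_rho keys_add_nat)
    qed
    finally show ?thesis using R by simp
  next
    case False
    have "(\<Sum>(x, y). lk (rho F f) x * lk (rho F g) y when k = x + y) = (\<Sum>xy::('n \<Rightarrow>\<^sub>0 nat) \<times> ('n \<Rightarrow>\<^sub>0 nat). (0::'k))"
    proof (rule Sum_any.cong)
      fix xy :: "('n \<Rightarrow>\<^sub>0 nat) \<times> ('n \<Rightarrow>\<^sub>0 nat)"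
      obtain x y where xy: "xy = (x, y)" by (cases xy)
      show "(case xy of (x, y) \<Rightarrow> lk (rho F f) x * lk (rho F g) y when k = x + y) = 0"
        using False by (auto simp: xy when_def lk_rho keys_add_nat)
    qed
    then show ?thesis using R False by (simp add: lk_rho)
  qed
qed

lemma in_PF_iff_rho: "f \<in> PF F \<longleftrightarrow> rho F f = 0"
proof
  assume "f \<in> PF F"
  then show "rho F f = 0" unfolding PF_def mI_def
    by (intro poly_mapping_eqI) (auto simp: lk_rho in_keys_iff)
next
  assume "rho F f = 0"
  then have "\<forall>t. lk (rho F f) t = 0" by simp
  then show "f \<in> PF F" unfolding PF_def mI_def
    by (auto simp: lk_rho in_keys_iff split: if_splits)
qed

lemma upset_meet: "upset {t. ks t \<inter> F \<noteq> {}}"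
  unfolding upset_def by (auto simp: keys_add_nat)

lemma PF_prime: "is_prime_ideal (PF F :: ('n::finite, 'k::field) mpoly set)"
  unfolding is_prime_ideal_def
proof (intro conjI allI impI)
  show "is_ideal (PF F :: ('n, 'k) mpoly set)" unfolding PF_def by (rule mI_ideal[OF upset_meet])
  show "(PF F :: ('n, 'k) mpoly set) \<noteq> UNIV" unfolding PF_def
    by (subst mI_UNIV[OF upset_meet]) simp
  fix a b :: "('n, 'k) mpoly"
  assume "a * b \<in> PF F"
  then have "rho F a * rho F b = 0" by (simp add: in_PF_iff_rho rho_mult)
  then have "rho F a = 0 \<or> rho F b = 0" using mpoly_no_zd by blast
  then show "a \<in> PF F \<or> b \<in> PF F" by (simp add: in_PF_iff_rho)
qed

lemma prime_one: assumes "is_prime_ideal Q" shows "1 \<notin> Q"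
proof
  assume "1 \<in> Q"
  then have "\<forall>r. r * 1 \<in> Q" using assms unfolding is_prime_ideal_def is_ideal_def by blast
  then have "Q = UNIV" by auto
  then show False using assms unfolding is_prime_ideal_def by blast
qed

lemma prime_pow: "is_prime_ideal Q \<Longrightarrow> f ^ m \<in> Q \<Longrightarrow> f \<in> Q"
proof (induction m)
  case 0 then show ?case using prime_one by auto
next
  case (Suc m) then show ?case unfolding is_prime_ideal_def by auto
qed

lemma monom_zero: "monom 0 = (1 :: ('n, 'k::comm_ring_1) mpoly)"
  unfolding monom_def by simp

lemma monom_prime_var:
  fixes t :: "'n::finite \<Rightarrow>\<^sub>0 nat"
  assumes "is_prime_ideal (Q :: ('n, 'k::comm_ring_1) mpoly set)" "monom t \<in> Q"
  shows "\<exists>i\<in>ks t. monom (ind {i}) \<in> Q"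
  using assms(2)
proof (induction "sum (lk t) UNIV" arbitrary: t rule: less_induct)
  case less
  show ?case
  proof (cases "t = 0")
    case True
    then show ?thesis using less.prems prime_one[OF assms(1)] by (simp add: monom_zero)
  next
    case False
    then obtain i where i: "i \<in> ks t" using keys_empty_iff[of t] by blast
    have teq: "t = ind {i} + (t - ind {i})"
      by (rule poly_mapping_eqI) (use i in \<open>auto simp: lookup_add lookup_minus lk_ind in_keys_iff\<close>)
    have "(monom t :: ('n, 'k) mpoly) = monom (ind {i} + (t - ind {i}))" using teq by (rule arg_cong)
    also have "\<dots> = monom (ind {i}) * (monom (t - ind {i}) :: ('n, 'k) mpoly)"
      by (simp add: monom_mult)
    finally have "monom t = monom (ind {i}) * (monom (t - ind {i}) :: ('n, 'k) mpoly)" .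
    then have "monom (ind {i}) * (monom (t - ind {i}) :: ('n, 'k) mpoly) \<in> Q" using less.prems by simp
    then have "monom (ind {i}) \<in> Q \<or> monom (t - ind {i}) \<in> Q"
      using assms(1) unfolding is_prime_ideal_def by blast
    then show ?thesis
    proof
      assume "monom (ind {i}) \<in> Q" then show ?thesis using i by blast
    next
      assume h: "monom (t - ind {i}) \<in> Q"
      have "sum (lk (t - ind {i})) UNIV < sum (lk t) UNIV"
      proof (rule sum_strict_mono_ex1)
        show "\<forall>x\<in>UNIV. lk (t - ind {i}) x \<le> lk t x" by (simp add: lookup_minus)
        show "\<exists>a\<in>UNIV. lk (t - ind {i}) a < lk t a"
          using i by (auto simp: lookup_minus lk_ind in_keys_iff intro!: bexI[of _ i])
      qed simp
      from less.hyps[OF this h] obtain j where "j \<in> ks (t - ind {i})" "monom (ind {j}) \<in> Q" by blast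
      moreover have "ks (t - ind {i}) \<subseteq> ks t" by (auto simp: in_keys_iff lookup_minus)
      ultimately show ?thesis by blast
    qed
  qed
qed

lemma up_UN: "up A = (\<Union>a\<in>A. up {a})"
  unfolding up_def by blast

lemma PF_gen: "PF F = (ideal_gen (monom ` (\<lambda>i. ind {i}) ` F) :: ('n::finite, 'k::comm_ring_1) mpoly set)"
proof -
  have u: "up {ind {i}} = {t. i \<in> ks t}" for i :: 'n using up_ind[of "{i}"] by simp
  have "up ((\<lambda>i. ind {i}) ` F) = (\<Union>i\<in>F. up {ind {i}})"
    by (subst up_UN) simp
  also have "\<dots> = {t. ks t \<inter> F \<noteq> {}}" unfolding u by blast
  finally have "up ((\<lambda>i. ind {i}) ` F) = {t. ks t \<inter> F \<noteq> {}}" .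
  then show ?thesis unfolding PF_def by (simp add: ideal_gen_monom)
qed

lemma PF_sub_prime:
  assumes "is_prime_ideal (Q :: ('n::finite, 'k::comm_ring_1) mpoly set)" "\<forall>i\<in>F. monom (ind {i}) \<in> Q"
  shows "PF F \<subseteq> Q"
proof -
  have "is_ideal Q" using assms(1) unfolding is_prime_ideal_def by blast
  moreover have "monom ` (\<lambda>i. ind {i}) ` F \<subseteq> Q" using assms(2) by blast
  ultimately show ?thesis unfolding PF_gen by (rule ideal_gen_least)
qed

lemma PF_sub_iff: "(PF F :: ('n::finite, 'k::comm_ring_1) mpoly set) \<subseteq> PF G \<longleftrightarrow> F \<subseteq> G"
proof -
  have "{t::_ \<Rightarrow>\<^sub>0 nat. ks t \<inter> F \<noteq> {}} \<subseteq> {t::_ \<Rightarrow>\<^sub>0 nat. ks t \<inter> G \<noteq> {}} \<longleftrightarrow> F \<subseteq> G"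
  proof
    assume h: "{t::_ \<Rightarrow>\<^sub>0 nat. ks t \<inter> F \<noteq> {}} \<subseteq> {t::_ \<Rightarrow>\<^sub>0 nat. ks t \<inter> G \<noteq> {}}"
    show "F \<subseteq> G"
    proof
      fix i assume "i \<in> F"
      then have "ind {i} \<in> {t::_ \<Rightarrow>\<^sub>0 nat. ks t \<inter> F \<noteq> {}}" by simp
      with h have "ind {i} \<in> {t::_ \<Rightarrow>\<^sub>0 nat. ks t \<inter> G \<noteq> {}}" by (rule subsetD)
      then have "ks (ind {i}) \<inter> G \<noteq> {}" by (rule CollectD)
      then show "i \<in> G" by simp
    qed
  next
    assume "F \<subseteq> G"
    then show "{t::_ \<Rightarrow>\<^sub>0 nat. ks t \<inter> F \<noteq> {}} \<subseteq> {t::_ \<Rightarrow>\<^sub>0 nat. ks t \<inter> G \<noteq> {}}" by blast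
  qed
  then show ?thesis unfolding PF_def mI_sub_iff .
qed

lemma PF_inj: "(PF F :: ('n::finite, 'k::comm_ring_1) mpoly set) = PF G \<longleftrightarrow> F = G"
  by (simp add: set_eq_subset PF_sub_iff)

definition Tr :: "('n \<Rightarrow>\<^sub>0 nat) set \<Rightarrow> 'n set set" where
  "Tr U = {F. \<forall>t\<in>U. ks t \<inter> F \<noteq> {}}"

lemma mI_sub_PF: "(mI U :: ('n, 'k::comm_ring_1) mpoly set) \<subseteq> PF F \<longleftrightarrow> F \<in> Tr U"
  unfolding PF_def mI_sub_iff Tr_def by auto

definition minimal :: "'a set set \<Rightarrow> 'a set set" where
  "minimal A = {F\<in>A. \<forall>G\<in>A. G \<subseteq> F \<longrightarrow> G = F}"

lemma exists_minimal:
  fixes F :: "'n::finite set"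
  assumes "F \<in> A" shows "\<exists>G\<in>minimal A. G \<subseteq> F"
  using assms
proof (induction "card F" arbitrary: F rule: less_induct)
  case less
  show ?case
  proof (cases "F \<in> minimal A")
    case True then show ?thesis by blast
  next
    case False
    then obtain G where "G \<in> A" "G \<subseteq> F" "G \<noteq> F" using less.prems unfolding minimal_def by blast
    then have "card G < card F" by (simp add: psubset_card_mono)
    from less.hyps[OF this \<open>G \<in> A\<close>] show ?thesis using \<open>G \<subseteq> F\<close> by blast
  qed
qed

lemma vars_Tr:
  assumes "is_prime_ideal (Q :: ('n::finite, 'k::comm_ring_1) mpoly set)" "mI U \<subseteq> Q"
  shows "{i. monom (ind {i}) \<in> Q} \<in> Tr U" "PF {i. monom (ind {i}) \<in> Q} \<subseteq> Q"
proof -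
  show "{i. monom (ind {i}) \<in> Q} \<in> Tr U" unfolding Tr_def
  proof (rule CollectI, rule ballI)
    fix t assume "t \<in> U"
    then have "monom t \<in> Q" using assms(2) by auto
    then show "ks t \<inter> {i. monom (ind {i}) \<in> Q} \<noteq> {}" using monom_prime_var[OF assms(1)] by blast
  qed
  show "PF {i. monom (ind {i}) \<in> Q} \<subseteq> Q" by (rule PF_sub_prime[OF assms(1)]) simp
qed

lemma minprimes_mI:
  assumes "upset U"
  shows "minprimes (mI U :: ('n::finite, 'k::field) mpoly set) = PF ` minimal (Tr U)"
proof
  show "minprimes (mI U :: ('n, 'k) mpoly set) \<subseteq> PF ` minimal (Tr U)"
  proof
    fix P :: "('n, 'k) mpoly set" assume P: "P \<in> minprimes (mI U)"
    define F where "F = {i. monom (ind {i}) \<in> P}"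
    have pr: "is_prime_ideal P" "mI U \<subseteq> P" using P unfolding minprimes_def by auto
    have min: "Q = P" if "is_prime_ideal Q" "mI U \<subseteq> Q" "Q \<subseteq> P" for Q
      using P that unfolding minprimes_def by auto
    have FT: "F \<in> Tr U" and FP: "PF F \<subseteq> P" using vars_Tr[OF pr] unfolding F_def by auto
    have "mI U \<subseteq> (PF F :: ('n, 'k) mpoly set)" using FT mI_sub_PF by blast
    then have eq: "PF F = P" using FP PF_prime by (rule min[rotated])
    have "F \<in> minimal (Tr U)" unfolding minimal_def
    proof (intro CollectI conjI ballI impI FT)
      fix G assume G: "G \<in> Tr U" "G \<subseteq> F"
      have "mI U \<subseteq> (PF G :: ('n, 'k) mpoly set)" using G mI_sub_PF by blast
      moreover have "(PF G :: ('n, 'k) mpoly set) \<subseteq> PF F" using G(2) PF_sub_iff by blast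
      ultimately have "PF G = P" using eq PF_prime by (intro min) auto
      then have "(PF G :: ('n, 'k) mpoly set) = PF F" using eq by simp
      then show "G = F" using PF_inj by blast
    qed
    then show "P \<in> PF ` minimal (Tr U)" using eq by blast
  qed
  show "PF ` minimal (Tr U) \<subseteq> minprimes (mI U :: ('n, 'k) mpoly set)"
  proof
    fix P :: "('n, 'k) mpoly set" assume "P \<in> PF ` minimal (Tr U)"
    then obtain F where F: "F \<in> minimal (Tr U)" "P = PF F" by blast
    have FT: "F \<in> Tr U" using F unfolding minimal_def by blast
    have sub: "mI U \<subseteq> P" using FT F(2) mI_sub_PF by blast
    have pp: "is_prime_ideal P" using F PF_prime by simp
    have "Q = P" if Q: "is_prime_ideal Q" "mI U \<subseteq> Q" "Q \<subseteq> P" for Q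
    proof -
      define G where "G = {i. monom (ind {i}) \<in> Q}"
      have GT: "G \<in> Tr U" and GQ: "PF G \<subseteq> Q" using vars_Tr[OF Q(1,2)] unfolding G_def by auto
      have "PF G \<subseteq> (PF F :: ('n, 'k) mpoly set)" using GQ Q(3) F(2) by blast
      then have "G \<subseteq> F" using PF_sub_iff by blast
      then have "G = F" using F GT unfolding minimal_def by blast
      then show "Q = P" using GQ Q(3) F(2) by blast
    qed
    then show "P \<in> minprimes (mI U)" unfolding minprimes_def using pp sub by blast
  qed
qed



lemma ideal_mult_left: "is_ideal I \<Longrightarrow> a \<in> I \<Longrightarrow> r * a \<in> I"
  unfolding is_ideal_def by blast

lemma ideal_mult_right: "is_ideal I \<Longrightarrow> a \<in> I \<Longrightarrow> a * r \<in> I"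
  unfolding is_ideal_def by (metis mult.commute)

lemma radical_ideal:
  fixes I :: "'a::comm_ring_1 set"
  assumes I: "is_ideal I" shows "is_ideal (radical I)"
  unfolding is_ideal_def
proof (intro conjI ballI allI)
  show "0 \<in> radical I" unfolding radical_def
    using I unfolding is_ideal_def by (auto intro: exI[of _ 1])
next
  fix r a assume "a \<in> radical I"
  then obtain m where "a ^ m \<in> I" unfolding radical_def by blast
  then have "r ^ m * a ^ m \<in> I" by (rule ideal_mult_left[OF I])
  then show "r * a \<in> radical I" unfolding radical_def by (auto simp: power_mult_distrib)
next
  fix a b assume "a \<in> radical I" "b \<in> radical I"
  then obtain m n where mn: "a ^ m \<in> I" "b ^ n \<in> I" unfolding radical_def by blast
  have "(a + b) ^ (m + n) = (\<Sum>k\<le>m + n. of_nat ((m + n) choose k) * a ^ k * b ^ (m + n - k))"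
    by (rule binomial_ring)
  also have "\<dots> \<in> I"
  proof (rule ideal_sum[OF I], simp, rule ballI)
    fix k assume "k \<in> {..m + n}"
    show "of_nat ((m + n) choose k) * a ^ k * b ^ (m + n - k) \<in> I"
    proof (cases "m \<le> k")
      case True
      then have "a ^ k = a ^ m * a ^ (k - m)" by (simp add: power_add[symmetric])
      then have "of_nat ((m + n) choose k) * a ^ k * b ^ (m + n - k) =
        (of_nat ((m + n) choose k) * a ^ (k - m) * b ^ (m + n - k)) * a ^ m"
        by (simp add: algebra_simps)
      then show ?thesis using ideal_mult_left[OF I mn(1)] by simp
    next
      case False
      then have e: "m + n - k = n + (m - k)" by arith
      have "b ^ (m + n - k) = b ^ n * b ^ (m - k)" unfolding e by (rule power_add)
      then have "of_nat ((m + n) choose k) * a ^ k * b ^ (m + n - k) =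
        (of_nat ((m + n) choose k) * a ^ k * b ^ (m - k)) * b ^ n"
        by (simp add: algebra_simps)
      then show ?thesis using ideal_mult_left[OF I mn(2)] by simp
    qed
  qed
  finally show "a + b \<in> radical I" unfolding radical_def by blast
qed

lemma single_pow:
  "\<exists>t'. (Poly_Mapping.single t c :: ('n, 'k::comm_ring_1) mpoly) ^ n = Poly_Mapping.single t' (c ^ n)
     \<and> (\<forall>i. lk t' i = n * lk t i)"
proof (induction n)
  case 0
  show ?case by (rule exI[of _ 0]) simp
next
  case (Suc n)
  then obtain t' where t': "(Poly_Mapping.single t c :: ('n, 'k) mpoly) ^ n = Poly_Mapping.single t' (c ^ n)"
    "\<forall>i. lk t' i = n * lk t i" by blast
  have "(Poly_Mapping.single t c :: ('n, 'k) mpoly) ^ Suc n = Poly_Mapping.single (t + t') (c * c ^ n)"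
    using t'(1) by (simp add: mult_single)
  moreover have "\<forall>i. lk (t + t') i = Suc n * lk t i" using t'(2) by (simp add: lookup_add)
  ultimately show ?case by auto
qed

definition V :: "'n set set \<Rightarrow> ('n \<Rightarrow>\<^sub>0 nat) set" where
  "V A = {t. \<forall>X\<in>A. ks t \<inter> X \<noteq> {}}"

definition sf :: "'n set set \<Rightarrow> ('n, 'k::comm_ring_1) mpoly set" where
  "sf A = mI (V A)"

definition upcl :: "'n set set \<Rightarrow> 'n set set" where
  "upcl A = {G. \<exists>X\<in>A. X \<subseteq> G}"

lemma upset_V: "upset (V A)"
  unfolding upset_def V_def by (auto simp: keys_add_nat)

lemma radical_mI:
  assumes U: "upset U"
  shows "radical (mI U :: ('n::finite, 'k::field) mpoly set) = sf (Tr U)"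
proof
  show "radical (mI U :: ('n, 'k) mpoly set) \<subseteq> sf (Tr U)"
  proof
    fix f :: "('n, 'k) mpoly" assume "f \<in> radical (mI U)"
    then obtain m where m: "f ^ m \<in> mI U" unfolding radical_def by blast
    have "ks f \<subseteq> V (Tr U)" unfolding V_def
    proof (rule subsetI, rule CollectI, rule ballI)
      fix t X assume t: "t \<in> ks f" and X: "X \<in> Tr U"
      have "mI U \<subseteq> (PF X :: ('n, 'k) mpoly set)" using X mI_sub_PF by blast
      then have "f ^ m \<in> PF X" using m by blast
      then have "f \<in> PF X" using prime_pow[OF PF_prime] by blast
      then show "ks t \<inter> X \<noteq> {}" using t unfolding PF_def mI_def by blast
    qed
    then show "f \<in> sf (Tr U)" unfolding sf_def mI_def by simp
  qed
  show "sf (Tr U) \<subseteq> radical (mI U :: ('n, 'k) mpoly set)"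
  proof
    fix f :: "('n, 'k) mpoly" assume f: "f \<in> sf (Tr U)"
    have RI: "is_ideal (radical (mI U :: ('n, 'k) mpoly set))" by (rule radical_ideal[OF mI_ideal[OF U]])
    have "(\<Sum>t\<in>ks f. Poly_Mapping.single t (lk f t)) \<in> radical (mI U)"
    proof (rule ideal_sum[OF RI finite_keys], rule ballI)
      fix t assume "t \<in> ks f"
      then have tV: "t \<in> V (Tr U)" using f unfolding sf_def mI_def by blast
      have "\<exists>s\<in>U. ks s \<subseteq> ks t"
      proof (rule ccontr)
        assume "\<not> (\<exists>s\<in>U. ks s \<subseteq> ks t)"
        then have "- ks t \<in> Tr U" unfolding Tr_def by blast
        then show False using tV unfolding V_def by blast
      qed
      then obtain s where s: "s \<in> U" "ks s \<subseteq> ks t" by blast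
      define N where "N = sum (lk s) UNIV"
      obtain t' where t': "(Poly_Mapping.single t (lk f t) :: ('n, 'k) mpoly) ^ N = Poly_Mapping.single t' (lk f t ^ N)"
        "\<forall>i. lk t' i = N * lk t i" using single_pow by blast
      have le: "lk s i \<le> lk t' i" for i
      proof (cases "lk s i = 0")
        case False
        then have "i \<in> ks s" by (simp add: in_keys_iff)
        then have "i \<in> ks t" using s(2) by blast
        then have "1 \<le> lk t i" by (simp add: in_keys_iff)
        moreover have "lk s i \<le> N" unfolding N_def by (rule member_le_sum) simp_all
        moreover have "N \<le> N * lk t i" using \<open>1 \<le> lk t i\<close> by (metis mult.right_neutral mult_le_mono2)
        ultimately have "lk s i \<le> N * lk t i" by linarith
        then show ?thesis using t'(2) by simp
      qed simp
      have eq: "s + (t' - s) = t'"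
        by (rule poly_mapping_eqI) (simp add: lookup_add lookup_minus le)
      have "s + (t' - s) \<in> U" using U s(1) unfolding upset_def by blast
      then have "t' \<in> U" unfolding eq .
      then have "(Poly_Mapping.single t' (lk f t ^ N) :: ('n, 'k) mpoly) \<in> mI U"
        unfolding mI_def by simp
      then have "Poly_Mapping.single t (lk f t) ^ N \<in> (mI U :: ('n, 'k) mpoly set)"
        using t'(1) by simp
      then show "Poly_Mapping.single t (lk f t) \<in> radical (mI U)"
        unfolding radical_def by blast
    qed
    then show "f \<in> radical (mI U)" using poly_sum_singles[of f] by simp
  qed
qed

lemma blocker: "Tr (V A :: ('n::finite \<Rightarrow>\<^sub>0 nat) set) = upcl A"
proof
  show "Tr (V A) \<subseteq> upcl A"
  proof
    fix G assume G: "G \<in> Tr (V A)"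
    show "G \<in> upcl A"
    proof (rule ccontr)
      assume "G \<notin> upcl A"
      then have "\<forall>X\<in>A. \<not> X \<subseteq> G" unfolding upcl_def by blast
      then have "ind (- G) \<in> V A" unfolding V_def by auto
      then show False using G unfolding Tr_def by auto
    qed
  qed
  show "upcl A \<subseteq> Tr (V A)" unfolding upcl_def Tr_def V_def by blast
qed

lemma colon_sf: "colon (sf A :: ('n, 'k::comm_ring_1) mpoly set) (monom b) = sf {X\<in>A. X \<inter> ks b = {}}"
proof -
  have "{t. t + b \<in> V A} = V {X\<in>A. X \<inter> ks b = {}}"
    unfolding V_def by (auto simp: keys_add_nat)
  then show ?thesis unfolding sf_def by (simp add: colon_mI)
qed

lemma sf_PF: "f \<in> sf A \<longleftrightarrow> (\<forall>X\<in>A. f \<in> PF X)"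
  unfolding sf_def PF_def mI_def V_def by blast

lemma ass_sub_min:
  assumes X: "is_ideal X" and semi: "\<And>f. f * f \<in> X \<Longrightarrow> f \<in> X"
  shows "ass X \<subseteq> minprimes X"
proof
  fix P assume "P \<in> ass X"
  then obtain f where P: "is_prime_ideal P" "P = colon X f" unfolding ass_def by blast
  have XP: "X \<subseteq> P" unfolding P(2) colon_def using ideal_mult_right[OF X] by blast
  have "Q = P" if Q: "is_prime_ideal Q" "X \<subseteq> Q" "Q \<subseteq> P" for Q
  proof -
    have "f \<notin> Q"
    proof
      assume "f \<in> Q"
      then have "f * f \<in> X" using Q(3) P(2) unfolding colon_def by blast
      then have "f \<in> X" by (rule semi)
      then have "P = UNIV" unfolding P(2) colon_def using ideal_mult_left[OF X] by blast
      then show False using P(1) unfolding is_prime_ideal_def by blast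
    qed
    have "P \<subseteq> Q"
    proof
      fix g assume "g \<in> P"
      then have "g * f \<in> Q" using P(2) Q(2) unfolding colon_def by blast
      then show "g \<in> Q" using Q(1) \<open>f \<notin> Q\<close> unfolding is_prime_ideal_def by blast
    qed
    then show ?thesis using Q(3) by blast
  qed
  then show "P \<in> minprimes X" unfolding minprimes_def using P(1) XP by blast
qed

lemma sf_semi: "f * f \<in> (sf A :: ('n::finite, 'k::field) mpoly set) \<Longrightarrow> f \<in> sf A"
  unfolding sf_PF using PF_prime unfolding is_prime_ideal_def by blast

lemma sf_ideal: "is_ideal (sf A :: ('n, 'k::comm_ring_1) mpoly set)"
  unfolding sf_def by (rule mI_ideal[OF upset_V])

lemma minprimes_sf: "minprimes (sf A :: ('n::finite, 'k::field) mpoly set) = PF ` minimal (upcl A)"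
  unfolding sf_def by (simp add: minprimes_mI[OF upset_V] blocker)

lemma V_single: "V {G} = {t. ks t \<inter> G \<noteq> {}}"
  unfolding V_def by simp

lemma ass_sf: "ass (sf A :: ('n::finite, 'k::field) mpoly set) = minprimes (sf A)"
proof
  show "ass (sf A :: ('n, 'k) mpoly set) \<subseteq> minprimes (sf A)"
    by (rule ass_sub_min[OF sf_ideal sf_semi])
  show "minprimes (sf A :: ('n, 'k) mpoly set) \<subseteq> ass (sf A)"
  proof
    fix P assume "P \<in> minprimes (sf A :: ('n, 'k) mpoly set)"
    then obtain G where G: "G \<in> minimal (upcl A)" "P = PF G" by (auto simp: minprimes_sf)
    then obtain X0 where X0: "X0 \<in> A" "X0 \<subseteq> G" unfolding minimal_def upcl_def by blast
    have "{X\<in>A. X \<inter> ks (ind (- G)) = {}} = {G}"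
    proof
      show "{X\<in>A. X \<inter> ks (ind (- G)) = {}} \<subseteq> {G}"
      proof
        fix X assume "X \<in> {X\<in>A. X \<inter> ks (ind (- G)) = {}}"
        then have "X \<in> upcl A" "X \<subseteq> G" unfolding upcl_def by auto
        then show "X \<in> {G}" using G(1) unfolding minimal_def by blast
      qed
      have "X0 \<in> upcl A" using X0 unfolding upcl_def by blast
      then have "X0 = G" using G(1) X0(2) unfolding minimal_def by blast
      then show "{G} \<subseteq> {X\<in>A. X \<inter> ks (ind (- G)) = {}}" using X0 by auto
    qed
    then have "colon (sf A) (monom (ind (- G))) = (sf {G} :: ('n, 'k) mpoly set)" by (simp add: colon_sf)
    also have "\<dots> = PF G" unfolding sf_def PF_def V_single ..
    finally have "P = colon (sf A) (monom (ind (- G)))" using G(2) by simp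
    moreover have "is_prime_ideal P" using G(2) PF_prime by simp
    ultimately show "P \<in> ass (sf A)" unfolding ass_def by blast
  qed
qed



definition res :: "'n set set \<Rightarrow> 'n set \<Rightarrow> 'n set set" where
  "res A B = {X\<in>A. X \<inter> B = {}}"

lemma Tr_insert: "Tr (U \<union> up {u}) = {X \<in> Tr U. X \<inter> ks u \<noteq> {}}"
proof -
  have "u \<in> up {u}" unfolding up_def by (auto intro: exI[of _ 0])
  then show ?thesis unfolding Tr_def using up_single_keys by blast
qed

lemma Tr_anti: "U \<subseteq> W \<Longrightarrow> Tr W \<subseteq> Tr U"
  unfolding Tr_def by blast

lemma Tr_upcl: "X \<in> Tr U \<Longrightarrow> X \<subseteq> Y \<Longrightarrow> Y \<in> Tr U"
  unfolding Tr_def by blast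

lemma zero_in_V: "(0 :: 'n \<Rightarrow>\<^sub>0 nat) \<in> V A \<longleftrightarrow> A = {}"
  unfolding V_def by auto

lemma V_anti: "A \<subseteq> A' \<Longrightarrow> V A' \<subseteq> V A"
  unfolding V_def by blast

lemma monom_ind_in_sf: "(monom (ind B) :: ('n::finite, 'k::comm_ring_1) mpoly) \<in> sf A \<longleftrightarrow> res A B = {}"
  unfolding sf_def res_def V_def by auto

lemma colon_sf_ind: "colon (sf A :: ('n::finite, 'k::comm_ring_1) mpoly set) (monom (ind B)) = sf (res A B)"
  unfolding res_def by (simp add: colon_sf)

lemma res_res: "res (res A B) C = res A (B \<union> C)"
  unfolding res_def by auto

lemma prime_colon:
  assumes "is_prime_ideal J" "x \<notin> J" shows "colon J x = J"
proof
  show "colon J x \<subseteq> J" using assms unfolding colon_def is_prime_ideal_def by blast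
  show "J \<subseteq> colon J x" using assms(1) unfolding colon_def is_prime_ideal_def
    using ideal_mult_right by blast
qed

lemma prime_radical: assumes "is_prime_ideal J" shows "radical J = J"
proof
  show "radical J \<subseteq> J" using prime_pow[OF assms] unfolding radical_def by blast
  show "J \<subseteq> radical J" unfolding radical_def by (auto intro: exI[of _ 1])
qed

lemma colon_one: "colon J 1 = J"
  unfolding colon_def by simp

lemma kclean_proper: "kclean k I \<Longrightarrow> I \<noteq> UNIV"
  by (induction rule: kclean.induct) auto

lemma star:
  fixes U :: "('n::finite \<Rightarrow>\<^sub>0 nat) set"
  assumes U: "upset U" and ass: "ass (mI U :: ('n, 'k::field) mpoly set) = minprimes (mI U)"
    and D: "ks u \<subseteq> D"
  shows "V (res (Tr U) D) = V (res (Tr {t. t + u \<in> U}) D)"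
proof
  have "U \<subseteq> {t. t + u \<in> U}" using U unfolding upset_def by blast
  then have "Tr {t. t + u \<in> U} \<subseteq> Tr U" by (rule Tr_anti)
  then have "res (Tr {t. t + u \<in> U}) D \<subseteq> res (Tr U) D" unfolding res_def by blast
  then show "V (res (Tr U) D) \<subseteq> V (res (Tr {t. t + u \<in> U}) D)" by (rule V_anti)
  show "V (res (Tr {t. t + u \<in> U}) D) \<subseteq> V (res (Tr U) D)"
  proof
    fix t assume t: "t \<in> V (res (Tr {t. t + u \<in> U}) D)"
    show "t \<in> V (res (Tr U) D)" unfolding V_def
    proof (rule CollectI, rule ballI)
      fix X assume X: "X \<in> res (Tr U) D"
      then obtain X1 where X1: "X1 \<in> minimal (Tr U)" "X1 \<subseteq> X"
        using exists_minimal[of X "Tr U"] unfolding res_def by blast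
      have "(PF X1 :: ('n, 'k) mpoly set) \<in> minprimes (mI U)" using X1 by (simp add: minprimes_mI[OF U])
      then have "(PF X1 :: ('n, 'k) mpoly set) \<in> ass (mI U)" using ass by simp
      then obtain f where f: "(PF X1 :: ('n, 'k) mpoly set) = colon (mI U) f" unfolding ass_def by blast
      have disj: "X1 \<inter> D = {}" using X X1 unfolding res_def by blast
      have nu: "(monom u :: ('n, 'k) mpoly) \<notin> PF X1"
        unfolding PF_def using D disj by auto
      have "colon (mI U) (monom u) \<subseteq> (PF X1 :: ('n, 'k) mpoly set)"
      proof
        fix g :: "('n, 'k) mpoly" assume "g \<in> colon (mI U) (monom u)"
        then have "g * monom u \<in> mI U" unfolding colon_def by simp
        then have "g * monom u * f \<in> mI U" by (rule ideal_mult_right[OF mI_ideal[OF U]])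
        then have "g * monom u \<in> PF X1" using f unfolding colon_def by simp
        then show "g \<in> PF X1" using nu PF_prime unfolding is_prime_ideal_def by blast
      qed
      then have "mI {t. t + u \<in> U} \<subseteq> (PF X1 :: ('n, 'k) mpoly set)" by (simp add: colon_mI)
      then have "X1 \<in> Tr {t. t + u \<in> U}" by (simp add: mI_sub_PF)
      then have "X1 \<in> res (Tr {t. t + u \<in> U}) D" using disj unfolding res_def by blast
      then have "ks t \<inter> X1 \<noteq> {}" using t unfolding V_def by blast
      then show "ks t \<inter> X \<noteq> {}" using X1(2) by blast
    qed
  qed
qed

lemma comb:
  assumes upA: "\<And>X Y. X \<in> A \<Longrightarrow> X \<subseteq> Y \<Longrightarrow> Y \<in> A"
    and cl: "minimal {X\<in>A. X \<inter> C \<noteq> {}} \<subseteq> minimal A"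
  shows "minimal {G\<in>upcl (res A B). G \<inter> (C - B) \<noteq> {}} \<subseteq> minimal (upcl (res A B))"
proof
  fix G assume G: "G \<in> minimal {G\<in>upcl (res A B). G \<inter> (C - B) \<noteq> {}}"
  let ?G = "{G\<in>upcl (res A B). G \<inter> (C - B) \<noteq> {}}"
  have Gu: "G \<in> upcl (res A B)" and GC: "G \<inter> (C - B) \<noteq> {}" using G unfolding minimal_def by auto
  have Gmin: "\<And>Z. Z \<in> ?G \<Longrightarrow> Z \<subseteq> G \<Longrightarrow> Z = G" using G unfolding minimal_def by blast
  have key: "X = G" if X: "X \<in> res A B" "X \<subseteq> G" for X
  proof (cases "X \<inter> (C - B) = {}")
    case False
    then have "X \<in> ?G" using X unfolding upcl_def by blast
    then show ?thesis using Gmin X(2) by blast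
  next
    case True
    obtain i where i: "i \<in> G" "i \<in> C" "i \<notin> B" using GC by blast
    have "insert i X \<in> ?G" using X i unfolding upcl_def by blast
    moreover have "insert i X \<subseteq> G" using X i by blast
    ultimately have GX: "G = insert i X" using Gmin by blast
    have XA: "X \<in> A" "X \<inter> B = {}" using X unfolding res_def by auto
    have XC: "X \<inter> C = {}" using True XA(2) by blast
    have GA: "G \<in> A" using upA[OF XA(1)] GX by blast
    have "G \<in> minimal {X\<in>A. X \<inter> C \<noteq> {}}" unfolding minimal_def
    proof (intro CollectI conjI ballI impI)
      show "G \<in> A" by (rule GA)
      show "G \<inter> C \<noteq> {}" using i by blast
      fix Z assume Z: "Z \<in> {X\<in>A. X \<inter> C \<noteq> {}}" "Z \<subseteq> G"
      have "Z \<inter> B = {}" using Z(2) GX XA(2) i(3) by blast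
      then have ZR: "Z \<in> res A B" using Z(1) unfolding res_def by blast
      have "i \<in> Z" using Z GX XC by blast
      then have "Z \<in> ?G" using ZR i unfolding upcl_def by blast
      then show "Z = G" using Gmin Z(2) by blast
    qed
    then have "G \<in> minimal A" using cl by blast
    then have "X = G" using XA(1) X(2) unfolding minimal_def by blast
    moreover have "i \<notin> X" using True i by blast
    ultimately show ?thesis using i(1) by blast
  qed
  show "G \<in> minimal (upcl (res A B))" unfolding minimal_def
  proof (intro CollectI conjI ballI impI Gu)
    fix Y assume Y: "Y \<in> upcl (res A B)" "Y \<subseteq> G"
    then obtain X where "X \<in> res A B" "X \<subseteq> Y" unfolding upcl_def by blast
    then have "X = G" using key Y(2) by blast
    then show "Y = G" using \<open>X \<subseteq> Y\<close> Y(2) by blast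
  qed
qed



lemma upset_Un: "upset U \<Longrightarrow> upset W \<Longrightarrow> upset (U \<union> W)"
  unfolding upset_def by blast

lemma upset_colon: assumes "upset U" shows "upset {t. t + u \<in> U}"
  unfolding upset_def
proof (intro allI impI)
  fix t s assume "t \<in> {t. t + u \<in> U}"
  then have "(t + u) + s \<in> U" using assms unfolding upset_def by blast
  moreover have "(t + u) + s = (t + s) + u" by (simp add: ac_simps)
  ultimately show "t + s \<in> {t. t + u \<in> U}" by simp
qed

lemma sf_eqI: "V A = V A' \<Longrightarrow> (sf A :: ('n, 'k::comm_ring_1) mpoly set) = sf A'"
  unfolding sf_def by simp

lemma ind_zero_iff: "ind B = (0 :: 'n::finite \<Rightarrow>\<^sub>0 nat) \<longleftrightarrow> B = {}"
proof
  assume "ind B = 0"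
  then have "ks (ind B) = ks (0 :: 'n \<Rightarrow>\<^sub>0 nat)" by simp
  then show "B = {}" by simp
qed simp

theorem T:
  fixes J :: "('n::finite, 'k::field) mpoly set"
  assumes "kclean k J"
  shows "\<forall>B. monom (ind B) \<notin> radical J \<longrightarrow> kclean k (colon (radical J) (monom (ind B)))"
  using assms
proof (induction rule: kclean.induct)
  case (prime I)
  show ?case
  proof (intro allI impI)
    fix B assume "monom (ind B) \<notin> radical I"
    then have "monom (ind B) \<notin> I" using prime_radical[OF prime(3)] by simp
    then show "kclean k (colon (radical I) (monom (ind B)))"
      using prime_radical[OF prime(3)] prime_colon[OF prime(3)] kclean.prime[OF prime(1-3)] by simp
  qed
next
  case (step I a)
  obtain U where U: "upset U" "I = mI U" using step(1) monomial_ideal_iff by blast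
  define A where "A = Tr U"
  define A' where "A' = Tr {t. t + a \<in> U}"
  define C where "C = ks a"
  define AC where "AC = {X\<in>A. X \<inter> C \<noteq> {}}"
  have upA: "\<And>X Y. X \<in> A \<Longrightarrow> X \<subseteq> Y \<Longrightarrow> Y \<in> A" unfolding A_def by (rule Tr_upcl)
  have radI: "radical I = sf A" unfolding A_def U(2) by (rule radical_mI[OF U(1)])
  have colI: "colon I (monom a) = mI {t. t + a \<in> U}" unfolding U(2) by (rule colon_mI)
  have radcol: "radical (colon I (monom a)) = sf A'"
    unfolding colI A'_def by (rule radical_mI[OF upset_colon[OF U(1)]])
  have genI: "ideal_gen (I \<union> {monom a}) = mI (U \<union> up {a})" unfolding U(2) by (rule gen_insert[OF U(1)])
  have upU: "upset (U \<union> up {a})" by (rule upset_Un[OF U(1) upset_up])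
  have radgen: "radical (ideal_gen (I \<union> {monom a})) = sf AC"
    unfolding genI AC_def A_def C_def radical_mI[OF upU] Tr_insert ..
  have IH1: "kclean k (sf (res A' B) :: ('n, 'k) mpoly set)" if "res A' B \<noteq> {}" for B
    using step.IH(1) radcol that by (simp add: monom_ind_in_sf colon_sf_ind)
  have IH2: "kclean k (sf (res AC B) :: ('n, 'k) mpoly set)" if "res AC B \<noteq> {}" for B
    using step.IH(2) radgen that by (simp add: monom_ind_in_sf colon_sf_ind)
  have ass: "ass (mI U :: ('n, 'k) mpoly set) = minprimes (mI U)" using step(3) U(2) by simp
  have starD: "V (res A D) = V (res A' D)" if "C \<subseteq> D" for D
    unfolding A_def A'_def using star[OF U(1) ass] that C_def by blast
  have clmin: "minimal AC \<subseteq> minimal A"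
  proof
    fix X assume "X \<in> minimal AC"
    then have "(PF X :: ('n, 'k) mpoly set) \<in> minprimes (ideal_gen (I \<union> {monom a}))"
      unfolding genI minprimes_mI[OF upU] Tr_insert AC_def A_def C_def by blast
    then have "(PF X :: ('n, 'k) mpoly set) \<in> minprimes I" using step(4) unfolding cleaner_def by blast
    then obtain Y where "Y \<in> minimal A" "(PF X :: ('n, 'k) mpoly set) = PF Y"
      unfolding U(2) minprimes_mI[OF U(1)] A_def by blast
    then show "X \<in> minimal A" by (simp add: PF_inj)
  qed
  show ?case
  proof (intro allI impI)
    fix B assume "monom (ind B) \<notin> radical I"
    then have RB: "res A B \<noteq> {}" unfolding radI by (simp add: monom_ind_in_sf)
    have goal_eq: "colon (radical I) (monom (ind B)) = sf (res A B)" unfolding radI by (rule colon_sf_ind)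
    show "kclean k (colon (radical I) (monom (ind B)))"
      unfolding goal_eq
    proof (cases "C \<subseteq> B")
      case True
      have VV: "V (res A B) = V (res A' B)" using starD[OF True] .
      have "res A' B \<noteq> {}"
      proof
        assume "res A' B = {}"
        then have "(0 :: 'n \<Rightarrow>\<^sub>0 nat) \<in> V (res A' B)" by (simp add: zero_in_V)
        then have "(0 :: 'n \<Rightarrow>\<^sub>0 nat) \<in> V (res A B)" using VV by simp
        then show False using RB by (simp add: zero_in_V)
      qed
      then have "kclean k (sf (res A' B) :: ('n, 'k) mpoly set)" by (rule IH1)
      moreover have "(sf (res A B) :: ('n, 'k) mpoly set) = sf (res A' B)" by (rule sf_eqI[OF VV])
      ultimately show "kclean k (sf (res A B) :: ('n, 'k) mpoly set)" by simp
    next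
      case CB: False
      show "kclean k (sf (res A B) :: ('n, 'k) mpoly set)"
      proof (cases "\<forall>X\<in>res A B. X \<inter> C \<noteq> {}")
        case True
        then have "res A B = res AC B" unfolding res_def AC_def by blast
        then show ?thesis using IH2 RB by simp
      next
        case False
        then obtain X0 where X0: "X0 \<in> A" "X0 \<inter> B = {}" "X0 \<inter> C = {}" unfolding res_def by blast
        define C' where "C' = C - B"
        have C'ne: "C' \<noteq> {}" using CB unfolding C'_def by blast
        obtain i where i: "i \<in> C" "i \<notin> B" using CB by blast
        define R where "R = res A B"
        have upR: "upset (V R \<union> up {ind C'})" by (rule upset_Un[OF upset_V upset_up])
        have genR: "ideal_gen (sf R \<union> {monom (ind C')}) = (mI (V R \<union> up {ind C'}) :: ('n, 'k) mpoly set)"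
          unfolding sf_def by (rule gen_insert[OF upset_V])
        have TrR: "Tr (V R \<union> up {ind C'}) = {G\<in>upcl R. G \<inter> C' \<noteq> {}}"
          by (simp add: Tr_insert blocker)
        show ?thesis unfolding R_def[symmetric]
        proof (rule kclean.step[where a = "ind C'"])
          show "monomial_ideal (sf R :: ('n, 'k) mpoly set)"
            unfolding sf_def monomial_ideal_iff using upset_V by blast
          show "(sf R :: ('n, 'k) mpoly set) \<noteq> UNIV"
            unfolding sf_def mI_UNIV[OF upset_V] zero_in_V R_def using RB .
          show "ass (sf R :: ('n, 'k) mpoly set) = minprimes (sf R)" by (rule ass_sf)
          show "cleaner (sf R :: ('n, 'k) mpoly set) (ind C')" unfolding cleaner_def
          proof (intro conjI)
            show "ind C' \<noteq> 0" using C'ne ind_zero_iff by blast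
            have "X0 \<in> res R C'" using X0 unfolding R_def res_def C'_def by blast
            then show "monom (ind C') \<notin> (sf R :: ('n, 'k) mpoly set)" by (auto simp: monom_ind_in_sf)
            have "minimal {G\<in>upcl R. G \<inter> C' \<noteq> {}} \<subseteq> minimal (upcl R)"
              unfolding R_def C'_def by (rule comb[OF upA clmin[unfolded AC_def]])
            then show "minprimes (ideal_gen (sf R \<union> {monom (ind C')})) \<subseteq> (minprimes (sf R) :: ('n, 'k) mpoly set set)"
              unfolding genR minprimes_mI[OF upR] TrR minprimes_sf by blast
          qed
          show "card (ks (ind C')) \<le> k + 1"
          proof -
            have "card C' \<le> card C" unfolding C'_def by (rule card_mono) auto
            then show ?thesis using step(5) C_def by simp
          qed
          have e1: "colon (sf R) (monom (ind C')) = (sf (res A (B \<union> C)) :: ('n, 'k) mpoly set)"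
            unfolding colon_sf_ind R_def res_res C'_def by (simp add: Un_Diff_cancel)
          have VV: "V (res A (B \<union> C)) = V (res A' (B \<union> C))" by (rule starD) blast
          have "X0 \<in> res A (B \<union> C)" using X0 unfolding res_def by blast
          then have "(0 :: 'n \<Rightarrow>\<^sub>0 nat) \<notin> V (res A (B \<union> C))" by (auto simp: zero_in_V)
          then have "(0 :: 'n \<Rightarrow>\<^sub>0 nat) \<notin> V (res A' (B \<union> C))" using VV by simp
          then have "res A' (B \<union> C) \<noteq> {}" by (simp add: zero_in_V)
          then have "kclean k (sf (res A' (B \<union> C)) :: ('n, 'k) mpoly set)" by (rule IH1)
          then show "kclean k (colon (sf R) (monom (ind C')) :: ('n, 'k) mpoly set)"
          proof -
            have "(sf (res A (B \<union> C)) :: ('n, 'k) mpoly set) = sf (res A' (B \<union> C))" by (rule sf_eqI[OF VV])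
            then show ?thesis unfolding e1 using \<open>kclean k (sf (res A' (B \<union> C)) :: ('n, 'k) mpoly set)\<close> by simp
          qed
          have e2: "V R \<union> up {ind C'} = V (res AC B)"
          proof
            show "V R \<union> up {ind C'} \<subseteq> V (res AC B)"
            proof
              fix t assume "t \<in> V R \<union> up {ind C'}"
              then consider "t \<in> V R" | "C' \<subseteq> ks t" unfolding up_ind by blast
              then show "t \<in> V (res AC B)"
              proof cases
                case 1
                have "res AC B \<subseteq> R" unfolding R_def res_def AC_def by blast
                then show ?thesis using 1 V_anti by blast
              next
                case 2
                show ?thesis unfolding V_def
                proof (rule CollectI, rule ballI)
                  fix X assume "X \<in> res AC B"
                  then have "X \<inter> C \<noteq> {}" "X \<inter> B = {}" unfolding res_def AC_def by auto
                  then have "X \<inter> C' \<noteq> {}" unfolding C'_def by blast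
                  then show "ks t \<inter> X \<noteq> {}" using 2 by blast
                qed
              qed
            qed
            show "V (res AC B) \<subseteq> V R \<union> up {ind C'}"
            proof
              fix t assume t: "t \<in> V (res AC B)"
              show "t \<in> V R \<union> up {ind C'}"
              proof (rule ccontr)
                assume "t \<notin> V R \<union> up {ind C'}"
                then obtain Y j where Y: "Y \<in> A" "Y \<inter> B = {}" "ks t \<inter> Y = {}"
                  and j: "j \<in> C'" "j \<notin> ks t"
                  unfolding up_ind R_def res_def V_def by blast
                have "insert j Y \<in> res AC B" using Y j upA[of Y "insert j Y"]
                  unfolding AC_def res_def C'_def by blast
                then show False using t Y(3) j(2) unfolding V_def by blast
              qed
            qed
          qed
          have "insert i X0 \<in> res AC B" using X0 i upA[of X0 "insert i X0"]
            unfolding AC_def res_def by blast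
          then have "kclean k (sf (res AC B) :: ('n, 'k) mpoly set)" using IH2 by blast
          then have "kclean k (mI (V R \<union> up {ind C'}) :: ('n, 'k) mpoly set)" unfolding e2 sf_def .
          then show "kclean k (ideal_gen (sf R \<union> {monom (ind C')}) :: ('n, 'k) mpoly set)"
            unfolding genR .
        qed
      qed
    qed
  qed
qed


lemma kclean_ideal: "kclean k I \<Longrightarrow> is_ideal I"
  by (induction rule: kclean.induct) (auto simp: monomial_ideal_def)

theorem theorem3p2:
  fixes I :: "('n::finite, 'k::field) mpoly set" and k :: nat
  assumes "kclean k I"
  shows "kclean k (radical I)"
proof -
  have "1 \<notin> radical I"
  proof
    assume "1 \<in> radical I"
    then obtain m where "(1 :: ('n, 'k) mpoly) ^ m \<in> I" unfolding radical_def by blast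
    then have "1 \<in> I" by simp
    then have "\<forall>r. r * 1 \<in> I" using kclean_ideal[OF assms] unfolding is_ideal_def by blast
    then have "I = UNIV" by auto
    then show False using kclean_proper[OF assms] by blast
  qed
  then have "monom (ind {}) \<notin> radical I" by (simp add: monom_zero)
  then have "kclean k (colon (radical I) (monom (ind {})))" using T[OF assms] by blast
  then show ?thesis by (simp add: monom_zero colon_one)
qed

end
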